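(* For $n\ge 1$ let $X(n)$ be the $\Delta$-complex with vertex set $\{-n,-(n-1),\dots,-1,1,2,\dots,n\}$ which has one $p$-simplex for every ordered sequence $(a_0,\dots,a_p)$ of $p+1$ vertices whose absolute values $|a_0|,\dots,|a_p|$ are pairwise distinct, the faces of this simplex being the simplices given by the ordered subsequences. Then $X(n)$ is $(n-1)$-spherical.
   Context: A polyhedron $Y$ is called $d$-spherical if $Y$ is nonempty and its reduced integral homology satisfies $\tilde H_i(Y)=0$ for all $i\neq d$. *)

theory Defs
  imports Main
begin

text \<open>A Delta-complex whose p-simplices are ordered lists of length p+1 (of vertices),
  with the i-th face obtained by deleting the i-th entry.  A set K of lists closed under
  deletion describes such a complex; the empty list plays the role of the unique
  (-1)-simplex of the augmented chain complex, so the homology of the chain complex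
  below is the reduced integral homology.\<close>

definition del_nth :: "nat \<Rightarrow> 'a list \<Rightarrow> 'a list" where
  "del_nth i xs = take i xs @ drop (Suc i) xs"

text \<open>Integral chains supported on simplices with k vertices (dimension k-1).\<close>
definition is_chain :: "'a list set \<Rightarrow> nat \<Rightarrow> ('a list \<Rightarrow> int) \<Rightarrow> bool" where
  "is_chain K k c \<longleftrightarrow> (\<forall>s. c s \<noteq> 0 \<longrightarrow> s \<in> K \<and> length s = k)"

definition delta_bd :: "'a list set \<Rightarrow> ('a list \<Rightarrow> int) \<Rightarrow> ('a list \<Rightarrow> int)" where
  "delta_bd K c = (\<lambda>t. \<Sum>s\<in>{s\<in>K. length s = Suc (length t)}.
       c s * (\<Sum>i<length s. if del_nth i s = t then (-1) ^ i else 0))"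

definition reduced_homology_vanishes :: "'a list set \<Rightarrow> int \<Rightarrow> bool" where
  "reduced_homology_vanishes K i \<longleftrightarrow>
     (\<forall>c. is_chain K (nat (i + 1)) c \<and> delta_bd K c = (\<lambda>_. 0) \<longrightarrow>
        (\<exists>b. is_chain K (nat (i + 2)) b \<and> delta_bd K b = c))"

definition spherical :: "'a list set \<Rightarrow> int \<Rightarrow> bool" where
  "spherical K d \<longleftrightarrow> (\<exists>s\<in>K. s \<noteq> []) \<and>
     (\<forall>i::int. i \<ge> -1 \<and> i \<noteq> d \<longrightarrow> reduced_homology_vanishes K i)"

definition Xcx :: "nat \<Rightarrow> int list set" where
  "Xcx n = {xs. set xs \<subseteq> {a. a \<noteq> 0 \<and> \<bar>a\<bar> \<le> int n} \<and> distinct (map abs xs)}"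

end

theory Submission
  imports Defs
begin


lemma length_del_nth: "i < length xs \<Longrightarrow> length (del_nth i xs) = length xs - 1"
  by (simp add: del_nth_def)

lemma nth_del_nth: "i < length xs \<Longrightarrow> k < length xs - 1 \<Longrightarrow>
   del_nth i xs ! k = (if k < i then xs!k else xs!Suc k)"
  by (auto simp: del_nth_def nth_append min_def)

lemma del_nth_Cons_Suc[simp]: "del_nth (Suc i) (a#xs) = a # del_nth i xs"
  by (simp add: del_nth_def)

lemma del_nth_Cons_0[simp]: "del_nth 0 (a#xs) = xs"
  by (simp add: del_nth_def)

lemma set_del_nth_sub: "set (del_nth i xs) \<subseteq> set xs"
  unfolding del_nth_def using set_take_subset set_drop_subset by fastforce

lemma map_del_nth: "map f (del_nth i xs) = del_nth i (map f xs)"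
  by (simp add: del_nth_def take_map drop_map)

lemma distinct_del_nth: "distinct xs \<Longrightarrow> distinct (del_nth i xs)"
proof -
  assume d: "distinct xs"
  have "set (take i xs) \<inter> set (drop (Suc i) xs) = {}"
    using set_take_disj_set_drop_if_distinct[OF d, of i "Suc i"] by simp
  then show ?thesis unfolding del_nth_def using d by (simp add: distinct_append)
qed

lemma set_del_nth: "i < length xs \<Longrightarrow> set xs = insert (xs!i) (set (del_nth i xs))"
proof -
  assume "i < length xs"
  then have "xs = take i xs @ xs!i # drop (Suc i) xs" by (rule id_take_nth_drop)
  then have "set xs = set (take i xs @ xs!i # drop (Suc i) xs)" by simp
  then show ?thesis unfolding del_nth_def by auto
qed

lemma del_nth_commute: "i \<le> j \<Longrightarrow> Suc j < length xs \<Longrightarrow>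
   del_nth i (del_nth (Suc j) xs) = del_nth j (del_nth i xs)"
  apply (rule nth_equalityI)
   apply (simp add: length_del_nth)
  apply (simp add: length_del_nth nth_del_nth)
  done




lemma dd_cancel:
  fixes s u :: "int list" and F :: "int set"
  defines "g \<equiv> \<lambda>i j. (if \<bar>s!i\<bar> \<notin> F \<and> \<bar>del_nth i s ! j\<bar> \<notin> F \<and> del_nth j (del_nth i s) = u then (-1::int)^(i+j) else 0)"
  shows "(\<Sum>i<length s. \<Sum>j<length s - 1. g i j) = 0"
proof -
  define L where "L = length s"
  define T1 where "T1 = {(i,j). i \<le> j \<and> j < L - 1}"
  define T2 where "T2 = {(i,j). j < i \<and> i < L}"
  have key: "g (Suc j) i = - g i j" if "i \<le> j" "j < L - 1" for i j
  proof -
    have a: "del_nth (Suc j) s ! i = s!i" using that by (simp add: nth_del_nth L_def)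
    have b: "del_nth i s ! j = s ! Suc j" using that by (simp add: nth_del_nth L_def)
    have c: "del_nth i (del_nth (Suc j) s) = del_nth j (del_nth i s)"
      using that by (intro del_nth_commute) (auto simp: L_def)
    have d: "(-1::int)^(Suc j + i) = - ((-1)^(i+j))" by (simp add: add.commute)
    show ?thesis unfolding g_def using a b c d by auto
  qed
  have fin1: "finite T1" unfolding T1_def
    by (rule finite_subset[of _ "{..<L} \<times> {..<L}"]) auto
  have fin2: "finite T2" unfolding T2_def
    by (rule finite_subset[of _ "{..<L} \<times> {..<L}"]) auto
  have split: "{..<L} \<times> {..<L - 1} = T1 \<union> T2" unfolding T1_def T2_def by auto
  have disj: "T1 \<inter> T2 = {}" unfolding T1_def T2_def by auto
  have bij: "bij_betw (\<lambda>(i,j). (Suc j, i)) T1 T2"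
    unfolding bij_betw_def inj_on_def T1_def T2_def
  proof (intro conjI ballI impI)
    show "(\<lambda>(i, j). (Suc j, i)) ` {(i, j). i \<le> j \<and> j < L - 1} = {(i, j). j < i \<and> i < L}"
    proof (rule set_eqI, rule iffI)
      fix p assume "p \<in> (\<lambda>(i, j). (Suc j, i)) ` {(i, j). i \<le> j \<and> j < L - 1}"
      then show "p \<in> {(i, j). j < i \<and> i < L}" by auto
    next
      fix p assume p: "p \<in> {(i, j). j < i \<and> i < L}"
      then obtain i j where "p = (i,j)" "j < i" "i < L" by auto
      then show "p \<in> (\<lambda>(i, j). (Suc j, i)) ` {(i, j). i \<le> j \<and> j < L - 1}"
        by (intro image_eqI[of _ _ "(j, i - 1)"]) auto
    qed
  qed auto
  have "(\<Sum>i<L. \<Sum>j<L - 1. g i j) = (\<Sum>p\<in>{..<L} \<times> {..<L - 1}. case p of (i,j) \<Rightarrow> g i j)"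
    by (simp add: sum.cartesian_product)
  also have "\<dots> = (\<Sum>p\<in>T1. case p of (i,j) \<Rightarrow> g i j) + (\<Sum>p\<in>T2. case p of (i,j) \<Rightarrow> g i j)"
    unfolding split by (rule sum.union_disjoint[OF fin1 fin2 disj])
  also have "(\<Sum>p\<in>T2. case p of (i,j) \<Rightarrow> g i j) = (\<Sum>p\<in>T1. case (case p of (i,j) \<Rightarrow> (Suc j, i)) of (i,j) \<Rightarrow> g i j)"
    by (rule sum.reindex_bij_betw[OF bij, symmetric])
  also have "\<dots> = (\<Sum>p\<in>T1. - (case p of (i,j) \<Rightarrow> g i j))"
    by (rule sum.cong) (auto simp: T1_def key)
  finally show ?thesis by (simp add: L_def sum_negf)
qed




definition YY :: "int set \<Rightarrow> int set \<Rightarrow> int list set" where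
  "YY A F = {xs. set xs \<subseteq> {a. a \<noteq> 0 \<and> \<bar>a\<bar> \<in> A} \<and> distinct (map abs xs) \<and> F \<subseteq> abs ` set xs}"

definition cf :: "int set \<Rightarrow> int list \<Rightarrow> int list \<Rightarrow> int" where
  "cf F s t = (\<Sum>i<length s. if \<bar>s!i\<bar> \<notin> F \<and> del_nth i s = t then (-1::int)^i else 0)"

definition DD :: "int set \<Rightarrow> int set \<Rightarrow> (int list \<Rightarrow> int) \<Rightarrow> int list \<Rightarrow> int" where
  "DD A F c t = (\<Sum>s\<in>YY A {}. c s * cf F s t)"

definition ch :: "int set \<Rightarrow> int set \<Rightarrow> nat \<Rightarrow> (int list \<Rightarrow> int) \<Rightarrow> bool" where
  "ch A F k c \<longleftrightarrow> (\<forall>s. c s \<noteq> 0 \<longrightarrow> s \<in> YY A F \<and> length s = k)"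

lemma finite_YY: "finite A \<Longrightarrow> finite (YY A F)"
proof -
  assume fA: "finite A"
  define S where "S = {a::int. a \<noteq> 0 \<and> \<bar>a\<bar> \<in> A}"
  have "S \<subseteq> A \<union> uminus ` A"
  proof
    fix a :: int assume "a \<in> S"
    then have "\<bar>a\<bar> \<in> A" by (simp add: S_def)
    then show "a \<in> A \<union> uminus ` A"
      by (cases "a \<ge> 0") (auto intro: image_eqI[of _ _ "- a"])
  qed
  then have fS: "finite S" using fA by (simp add: finite_subset)
  have "YY A F \<subseteq> {xs. set xs \<subseteq> S \<and> length xs \<le> card S}"
  proof
    fix xs assume "xs \<in> YY A F"
    then have "set xs \<subseteq> S" "distinct xs" unfolding YY_def S_def by (auto simp: distinct_map)
    moreover have "card (set xs) \<le> card S" using fS \<open>set xs \<subseteq> S\<close> by (rule card_mono)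
    ultimately show "xs \<in> {xs. set xs \<subseteq> S \<and> length xs \<le> card S}"
      by (simp add: distinct_card)
  qed
  then show ?thesis using finite_lists_length_le[OF fS] finite_subset by blast
qed

lemma YY_mono: "F \<subseteq> F' \<Longrightarrow> YY A F' \<subseteq> YY A F"
  unfolding YY_def by auto

lemma del_YY: "s \<in> YY A F \<Longrightarrow> i < length s \<Longrightarrow> \<bar>s!i\<bar> \<notin> F \<Longrightarrow> del_nth i s \<in> YY A F"
proof -
  assume s: "s \<in> YY A F" and i: "i < length s" and p: "\<bar>s!i\<bar> \<notin> F"
  have se: "set s = insert (s!i) (set (del_nth i s))" by (rule set_del_nth[OF i])
  have "distinct (map abs s)" using s unfolding YY_def by simp
  then have "distinct (del_nth i (map abs s))" by (rule distinct_del_nth)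
  then have "distinct (map abs (del_nth i s))" by (simp add: map_del_nth)
  moreover have "set (del_nth i s) \<subseteq> {a. a \<noteq> 0 \<and> \<bar>a\<bar> \<in> A}"
  proof -
    have "set s \<subseteq> {a. a \<noteq> 0 \<and> \<bar>a\<bar> \<in> A}" using s by (simp add: YY_def)
    then show ?thesis by (rule order_trans[OF set_del_nth_sub])
  qed
  moreover have "F \<subseteq> abs ` set (del_nth i s)"
  proof
    fix f assume f: "f \<in> F"
    then have "f \<in> abs ` set s" using s unfolding YY_def by blast
    then have "f \<in> insert \<bar>s!i\<bar> (abs ` set (del_nth i s))" using se by simp
    moreover have "f \<noteq> \<bar>s!i\<bar>" using f p by blast
    ultimately show "f \<in> abs ` set (del_nth i s)" by blast
  qed
  ultimately show ?thesis unfolding YY_def by blast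
qed

lemma DD_diff: "DD A F (\<lambda>s. f s - g s) t = DD A F f t - DD A F g t"
  unfolding DD_def by (simp add: left_diff_distrib sum_subtractf)

lemma DD_add: "DD A F (\<lambda>s. f s + g s) t = DD A F f t + DD A F g t"
  unfolding DD_def by (simp add: distrib_right sum.distrib)

lemma DD_zero: "DD A F (\<lambda>_. 0) = (\<lambda>_. 0)"
  unfolding DD_def by simp

lemma inner_zero:
  assumes fA: "finite A" and s: "s \<in> YY A {}"
  shows "(\<Sum>t\<in>YY A {}. cf F s t * cf F t u) = 0"
proof -
  define U where "U = YY A {}"
  define L where "L = length s"
  have "(\<Sum>t\<in>U. cf F s t * cf F t u)
      = (\<Sum>t\<in>U. \<Sum>i<L. if \<bar>s!i\<bar> \<notin> F \<and> del_nth i s = t then (-1::int)^i * cf F t u else 0)"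
    unfolding cf_def[of F s] L_def sum_distrib_right by (intro sum.cong refl) simp
  also have "\<dots> = (\<Sum>i<L. \<Sum>t\<in>U. if \<bar>s!i\<bar> \<notin> F \<and> del_nth i s = t then (-1::int)^i * cf F t u else 0)"
    by (rule sum.swap)
  also have "\<dots> = (\<Sum>i<L. if \<bar>s!i\<bar> \<notin> F then (-1::int)^i * cf F (del_nth i s) u else 0)"
  proof (rule sum.cong[OF refl])
    fix i assume i: "i \<in> {..<L}"
    show "(\<Sum>t\<in>U. if \<bar>s!i\<bar> \<notin> F \<and> del_nth i s = t then (-1::int)^i * cf F t u else 0)
        = (if \<bar>s!i\<bar> \<notin> F then (-1::int)^i * cf F (del_nth i s) u else 0)"
    proof (cases "\<bar>s!i\<bar> \<notin> F")
      case True
      have "del_nth i s \<in> U" using del_YY[OF s, of i] i unfolding U_def L_def by auto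
      then show ?thesis using True finite_YY[OF fA, of "{}"] unfolding U_def
        by (simp add: sum.delta)
    qed simp
  qed
  also have "\<dots> = (\<Sum>i<L. \<Sum>j<L - 1. (if \<bar>s!i\<bar> \<notin> F \<and> \<bar>del_nth i s ! j\<bar> \<notin> F \<and> del_nth j (del_nth i s) = u then (-1::int)^(i+j) else 0))"
  proof (rule sum.cong[OF refl])
    fix i assume i: "i \<in> {..<L}"
    then have len: "length (del_nth i s) = L - 1" by (simp add: length_del_nth L_def)
    show "(if \<bar>s!i\<bar> \<notin> F then (-1::int)^i * cf F (del_nth i s) u else 0) =
      (\<Sum>j<L - 1. (if \<bar>s!i\<bar> \<notin> F \<and> \<bar>del_nth i s ! j\<bar> \<notin> F \<and> del_nth j (del_nth i s) = u then (-1::int)^(i+j) else 0))"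
      unfolding cf_def len sum_distrib_left by (auto intro!: sum.cong simp: power_add)
  qed
  also have "\<dots> = 0" unfolding L_def by (rule dd_cancel)
  finally show ?thesis unfolding U_def .
qed

lemma DD_DD:
  assumes fA: "finite A"
  shows "DD A F (DD A F b) u = 0"
proof -
  have "DD A F (DD A F b) u = (\<Sum>t\<in>YY A {}. \<Sum>s\<in>YY A {}. b s * cf F s t * cf F t u)"
    unfolding DD_def by (simp add: sum_distrib_right)
  also have "\<dots> = (\<Sum>s\<in>YY A {}. b s * (\<Sum>t\<in>YY A {}. cf F s t * cf F t u))"
    by (subst sum.swap) (simp add: sum_distrib_left mult.assoc)
  also have "\<dots> = 0" using inner_zero[OF fA] by simp
  finally show ?thesis .
qed




lemma nth_notin_del_nth: "distinct xs \<Longrightarrow> i < length xs \<Longrightarrow> xs!i \<notin> set (del_nth i xs)"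
proof -
  assume d: "distinct xs" and i: "i < length xs"
  have "xs = take i xs @ xs!i # drop (Suc i) xs" by (rule id_take_nth_drop[OF i])
  then have "distinct (take i xs @ xs!i # drop (Suc i) xs)" using d by simp
  then show ?thesis unfolding del_nth_def by (simp add: distinct_append)
qed

lemma cf_ins_eq:
  assumes s: "s \<in> YY A {}" and mt: "m \<in> abs ` set t"
  shows "cf (insert m F) s t = cf F s t"
  unfolding cf_def
proof (rule sum.cong[OF refl])
  fix i assume i: "i \<in> {..<length s}"
  have "\<not> (\<bar>s!i\<bar> = m \<and> del_nth i s = t)"
  proof
    assume a: "\<bar>s!i\<bar> = m \<and> del_nth i s = t"
    have d: "distinct (map abs s)" using s by (simp add: YY_def)
    have "map abs s ! i \<notin> set (del_nth i (map abs s))"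
      using nth_notin_del_nth[OF d] i by simp
    then have "m \<notin> set (del_nth i (map abs s))" using a i by simp
    then have "m \<notin> abs ` set t" using a by (metis map_del_nth set_map)
    then show False using mt by simp
  qed
  then show "(if \<bar>s ! i\<bar> \<notin> insert m F \<and> del_nth i s = t then (- 1) ^ i else 0) =
         (if \<bar>s ! i\<bar> \<notin> F \<and> del_nth i s = t then (- 1::int) ^ i else 0)" by auto
qed

lemma cf_zero_new:
  assumes mt: "m \<in> abs ` set t" and ms: "m \<notin> abs ` set s"
  shows "cf F s t = 0"
  unfolding cf_def
proof (rule sum.neutral, rule ballI)
  fix i assume i: "i \<in> {..<length s}"
  have "del_nth i s \<noteq> t"
  proof
    assume e: "del_nth i s = t"
    have "set t \<subseteq> set s" using set_del_nth_sub[of i s] unfolding e .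
    then have "abs ` set t \<subseteq> abs ` set s" by (rule image_mono)
    then show False using mt ms by (auto simp del: image_iff)
  qed
  then show "(if \<bar>s ! i\<bar> \<notin> F \<and> del_nth i s = t then (- 1::int) ^ i else 0) = 0" by simp
qed

lemma cf_zero_lost:
  assumes ms: "m \<in> abs ` set s" and mt: "m \<notin> abs ` set t"
  shows "cf (insert m F) s t = 0"
  unfolding cf_def
proof (rule sum.neutral, rule ballI)
  fix i assume i: "i \<in> {..<length s}"
  have "\<not> (\<bar>s!i\<bar> \<noteq> m \<and> del_nth i s = t)"
  proof
    assume a: "\<bar>s!i\<bar> \<noteq> m \<and> del_nth i s = t"
    have "set s = insert (s!i) (set (del_nth i s))" using i by (simp add: set_del_nth)
    then have "abs ` set s = insert \<bar>s!i\<bar> (abs ` set t)" using a by simp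
    then have "m \<in> insert \<bar>s!i\<bar> (abs ` set t)" using ms by simp
    then show False using a mt by simp
  qed
  then show "(if \<bar>s ! i\<bar> \<notin> insert m F \<and> del_nth i s = t then (- 1::int) ^ i else 0) = 0" by auto
qed

lemma ch_DD:
  assumes b: "ch A F (Suc k) b"
  shows "ch A F k (DD A F b)"
  unfolding ch_def
proof (intro allI impI)
  fix t assume "DD A F b t \<noteq> 0"
  then obtain s where s: "s \<in> YY A {}" "b s * cf F s t \<noteq> 0"
    unfolding DD_def by (rule sum.not_neutral_contains_not_neutral)
  then have bs: "b s \<noteq> 0" and c: "cf F s t \<noteq> 0" by simp_all
  from c obtain i where i: "i < length s" "(if \<bar>s!i\<bar> \<notin> F \<and> del_nth i s = t then (-1::int)^i else 0) \<noteq> 0"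
    unfolding cf_def by (rule sum.not_neutral_contains_not_neutral) simp
  have p: "\<bar>s!i\<bar> \<notin> F" and e: "del_nth i s = t" using i(2) by (simp_all split: if_splits)
  have sY: "s \<in> YY A F" and ls: "length s = Suc k" using b bs unfolding ch_def by auto
  show "t \<in> YY A F \<and> length t = k"
    using del_YY[OF sY i(1) p] length_del_nth[OF i(1)] e ls by simp
qed

lemma cf_Cons:
  "cf F (a#s) t = (if \<bar>a\<bar> \<notin> F \<and> s = t then 1 else 0) - (if t \<noteq> [] \<and> hd t = a then cf F s (tl t) else 0)"
proof (cases t)
  case Nil
  then show ?thesis unfolding cf_def by (simp add: sum.lessThan_Suc_shift del: sum.lessThan_Suc)
next
  case (Cons b t')
  have "(\<Sum>i<length s. if \<bar>s!i\<bar> \<notin> F \<and> a # del_nth i s = b # t' then (-1::int)^Suc i else 0)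
      = - (if b = a then (\<Sum>i<length s. if \<bar>s!i\<bar> \<notin> F \<and> del_nth i s = t' then (-1::int)^i else 0) else 0)"
    by (cases "b = a") (auto simp: sum_negf[symmetric] intro!: sum.cong)
  then show ?thesis using Cons unfolding cf_def by (simp add: sum.lessThan_Suc_shift del: sum.lessThan_Suc)
qed

definition hh :: "int \<Rightarrow> (int list \<Rightarrow> int) \<Rightarrow> int list \<Rightarrow> int" where
  "hh m x s = (if s \<noteq> [] \<and> hd s = m then x (tl s) else 0)"

lemma Cons_YY:
  assumes "s \<in> YY A F" "m \<in> A" "m > 0" "m \<notin> abs ` set s"
  shows "m # s \<in> YY A F"
  using assms unfolding YY_def by auto

lemma cone:
  assumes fA: "finite A" and mA: "m \<in> A" and mpos: "m > 0" and mF: "m \<notin> F"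
    and x: "\<forall>s. x s \<noteq> 0 \<longrightarrow> s \<in> YY A {} \<and> m \<notin> abs ` set s"
  shows "DD A F (hh m x) t = x t - hh m (DD A F x) t"
proof -
  define U where "U = YY A {}"
  define S where "S = {s \<in> U. m \<notin> abs ` set s}"
  have fU: "finite U" unfolding U_def using finite_YY[OF fA] .
  have SU: "S \<subseteq> U" unfolding S_def by auto
  have fS: "finite S" using finite_subset[OF SU fU] .
  have img: "Cons m ` S \<subseteq> U" unfolding S_def U_def using Cons_YY[OF _ mA mpos] by auto
  have "DD A F (hh m x) t = (\<Sum>s\<in>Cons m ` S. hh m x s * cf F s t)"
    unfolding DD_def U_def[symmetric]
  proof (rule sum.mono_neutral_right[OF fU img])
    show "\<forall>s\<in>U - Cons m ` S. hh m x s * cf F s t = 0"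
    proof
      fix s assume s: "s \<in> U - Cons m ` S"
      show "hh m x s * cf F s t = 0"
      proof (cases "s \<noteq> [] \<and> hd s = m \<and> x (tl s) \<noteq> 0")
        case True
        then have "tl s \<in> S" using x unfolding S_def U_def by auto
        moreover have "s = m # tl s" using True by (cases s) auto
        ultimately have "s \<in> Cons m ` S" by blast
        then show ?thesis using s by blast
      qed (auto simp: hh_def)
    qed
  qed
  also have "\<dots> = (\<Sum>s\<in>S. x s * cf F (m # s) t)"
    by (subst sum.reindex) (auto simp: hh_def)
  also have "\<dots> = (\<Sum>s\<in>S. (if s = t then x s else 0)) - (if t \<noteq> [] \<and> hd t = m then (\<Sum>s\<in>S. x s * cf F s (tl t)) else 0)"
    using mpos mF by (simp add: cf_Cons right_diff_distrib sum_subtractf if_distrib[of "\<lambda>z. _ * z"] cong: if_cong)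
  also have "(\<Sum>s\<in>S. (if s = t then x s else 0)) = x t"
    using fS x unfolding S_def U_def by (auto simp: sum.delta)
  also have "(\<Sum>s\<in>S. x s * cf F s (tl t)) = DD A F x (tl t)"
    unfolding DD_def U_def[symmetric]
    by (rule sum.mono_neutral_left[OF fU SU]) (use x in \<open>auto simp: S_def U_def\<close>)
  finally show ?thesis unfolding hh_def[of m "DD A F x"] .
qed




lemma main:
  assumes fA: "finite A" and pos: "\<forall>a\<in>A. a > 0"
  shows "F \<subseteq> A \<Longrightarrow> k < card A \<Longrightarrow> ch A F k c \<Longrightarrow> DD A F c = (\<lambda>_. 0) \<Longrightarrow>
         \<exists>b. ch A F (Suc k) b \<and> DD A F b = c"
proof (induction "card (A - F)" arbitrary: F c rule: less_induct)
  case less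
  note FA = less.prems(1) and kA = less.prems(2) and cc = less.prems(3) and cyc = less.prems(4)
  show ?case
  proof (cases "A - F = {}")
    case True
    have c0: "c = (\<lambda>_. 0)"
    proof
      fix s show "c s = 0"
      proof (rule ccontr)
        assume "c s \<noteq> 0"
        then have sY: "s \<in> YY A F" and ls: "length s = k" using cc unfolding ch_def by simp_all
        have "F \<subseteq> abs ` set s" using sY unfolding YY_def by simp
        moreover have "A \<subseteq> F" using True by simp
        ultimately have "A \<subseteq> abs ` set s" by (rule order_trans[rotated])
        then have "card A \<le> card (abs ` set s)" by (rule card_mono[rotated]) simp
        also have "\<dots> \<le> card (set s)" by (rule card_image_le) simp
        also have "\<dots> \<le> length s" by (rule card_length)
        finally show False using ls kA by simp
      qed
    qed
    show ?thesis
      by (rule exI[of _ "\<lambda>_. 0"]) (simp add: ch_def DD_zero c0)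
  next
    case False
    then obtain m where mA: "m \<in> A" and mF: "m \<notin> F" by blast
    define F' where "F' = insert m F"
    have mpos: "m > 0" using pos mA by simp
    have F'A: "F' \<subseteq> A" unfolding F'_def using FA mA by simp
    have "A - F' \<subset> A - F" unfolding F'_def using mA mF by blast
    then have lt: "card (A - F') < card (A - F)"
      using fA by (intro psubset_card_mono) simp_all
    define c2 where "c2 = (\<lambda>s. if m \<in> abs ` set s then c s else 0)"
    have c2ch: "ch A F' k c2"
      unfolding ch_def
    proof (intro allI impI)
      fix s assume h: "c2 s \<noteq> 0"
      then have ms: "m \<in> abs ` set s" and cs: "c s \<noteq> 0" unfolding c2_def by (simp_all split: if_splits)
      then have "s \<in> YY A F" "length s = k" using cc unfolding ch_def by simp_all
      then show "s \<in> YY A F' \<and> length s = k" using ms unfolding YY_def F'_def by simp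
    qed
    have c2cyc: "DD A F' c2 = (\<lambda>_. 0)"
    proof
      fix t show "DD A F' c2 t = 0"
      proof (cases "m \<in> abs ` set t")
        case True
        have "DD A F' c2 t = DD A F c t"
          unfolding DD_def
        proof (rule sum.cong[OF refl])
          fix s assume s: "s \<in> YY A {}"
          show "c2 s * cf F' s t = c s * cf F s t"
          proof (cases "m \<in> abs ` set s")
            case True2: True
            then show ?thesis using cf_ins_eq[OF s True] unfolding c2_def F'_def by simp
          next
            case False
            then show ?thesis using cf_zero_new[OF True False] unfolding c2_def by simp
          qed
        qed
        also have "\<dots> = 0" using fun_cong[OF cyc, of t] by simp
        finally show ?thesis .
      next
        case False
        show "DD A F' c2 t = 0" unfolding DD_def
        proof (rule sum.neutral, rule ballI)
          fix s assume s: "s \<in> YY A {}"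
          show "c2 s * cf F' s t = 0"
          proof (cases "m \<in> abs ` set s")
            case True
            then show ?thesis using cf_zero_lost[OF True False] unfolding F'_def by simp
          next
            case False
            then show ?thesis unfolding c2_def by simp
          qed
        qed
      qed
    qed
    obtain b where bch: "ch A F' (Suc k) b" and bd: "DD A F' b = c2"
      using less.hyps[OF lt F'A kA c2ch c2cyc] by blast
    have YF': "YY A F' \<subseteq> YY A F" unfolding F'_def by (rule YY_mono) (rule subset_insertI)
    have YF0: "YY A F \<subseteq> YY A {}" by (rule YY_mono) simp
    have bch2: "ch A F (Suc k) b" using bch YF' unfolding ch_def by blast
    have DDeq: "DD A F b t = DD A F' b t" if mt: "m \<in> abs ` set t" for t
      unfolding DD_def
    proof (rule sum.cong[OF refl])
      fix s assume s: "s \<in> YY A {}"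
      show "b s * cf F s t = b s * cf F' s t"
        using cf_ins_eq[OF s mt, of F] unfolding F'_def by simp
    qed
    define x where "x = (\<lambda>s. c s - DD A F b s)"
    have xm: "x s = 0" if ms: "m \<in> abs ` set s" for s
    proof -
      have "DD A F b s = c2 s" using DDeq[OF ms] bd by simp
      also have "\<dots> = c s" using ms unfolding c2_def by simp
      finally show ?thesis unfolding x_def by simp
    qed
    have xch: "ch A F k x" unfolding ch_def
    proof (intro allI impI)
      fix s assume "x s \<noteq> 0"
      then have "c s \<noteq> 0 \<or> DD A F b s \<noteq> 0" unfolding x_def by auto
      then show "s \<in> YY A F \<and> length s = k"
        using cc ch_DD[OF bch2] unfolding ch_def by blast
    qed
    have xsupp: "\<forall>s. x s \<noteq> 0 \<longrightarrow> s \<in> YY A {} \<and> m \<notin> abs ` set s"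
      using xch xm YF0 unfolding ch_def by blast
    have xcyc: "DD A F x t = 0" for t
      unfolding x_def DD_diff using fun_cong[OF cyc, of t] DD_DD[OF fA] by simp
    have hx: "DD A F (hh m x) t = x t" for t
      using cone[OF fA mA mpos mF xsupp, of t] xcyc by (simp add: hh_def)
    define b' where "b' = (\<lambda>s. b s + hh m x s)"
    have "DD A F b' = c"
    proof
      fix t show "DD A F b' t = c t"
        unfolding b'_def DD_add hx unfolding x_def by simp
    qed
    moreover have "ch A F (Suc k) b'" unfolding ch_def
    proof (intro allI impI)
      fix s assume "b' s \<noteq> 0"
      then have "b s \<noteq> 0 \<or> hh m x s \<noteq> 0" unfolding b'_def by auto
      then show "s \<in> YY A F \<and> length s = Suc k"
      proof
        assume "b s \<noteq> 0" then show ?thesis using bch2 unfolding ch_def by blast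
      next
        assume "hh m x s \<noteq> 0"
        then have ne: "s \<noteq> []" and hd: "hd s = m" and xt: "x (tl s) \<noteq> 0"
          unfolding hh_def by (simp_all split: if_splits)
        have se: "s = m # tl s" using ne hd by (cases s) simp_all
        have "tl s \<in> YY A F" "length (tl s) = k" using xch xt unfolding ch_def by blast+
        moreover have "m \<notin> abs ` set (tl s)" using xsupp xt by simp
        ultimately have "m # tl s \<in> YY A F" "length (m # tl s) = Suc k"
          using Cons_YY[OF _ mA mpos] by simp_all
        then show ?thesis using se by metis
      qed
    qed
    ultimately show ?thesis by blast
  qed
qed




lemma Xcx_YY: "Xcx n = YY {1..int n} {}"
proof -
  have "{a::int. a \<noteq> 0 \<and> \<bar>a\<bar> \<in> {1..int n}} = {a. a \<noteq> 0 \<and> \<bar>a\<bar> \<le> int n}" by auto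
  then show ?thesis unfolding Xcx_def YY_def by simp
qed

lemma delta_DD: "delta_bd (Xcx n) c = DD {1..int n} {} c"
proof
  fix t
  define K where "K = Xcx n"
  have fK: "finite K" unfolding K_def Xcx_YY by (rule finite_YY) simp
  have "delta_bd K c t = (\<Sum>s\<in>{s\<in>K. length s = Suc (length t)}. c s * cf {} s t)"
    unfolding delta_bd_def cf_def by simp
  also have "\<dots> = (\<Sum>s\<in>K. c s * cf {} s t)"
  proof (rule sum.mono_neutral_left[OF fK])
    show "{s \<in> K. length s = Suc (length t)} \<subseteq> K" by blast
    show "\<forall>s\<in>K - {s \<in> K. length s = Suc (length t)}. c s * cf {} s t = 0"
    proof
      fix s assume s: "s \<in> K - {s \<in> K. length s = Suc (length t)}"
      then have ls: "length s \<noteq> Suc (length t)" by simp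
      have "cf {} s t = 0" unfolding cf_def
      proof (rule sum.neutral, rule ballI)
        fix i assume i: "i \<in> {..<length s}"
        then have "length (del_nth i s) = length s - 1" by (simp add: length_del_nth)
        then have "del_nth i s \<noteq> t" using ls i by auto
        then show "(if \<bar>s ! i\<bar> \<notin> {} \<and> del_nth i s = t then (- 1::int) ^ i else 0) = 0" by simp
      qed
      then show "c s * cf {} s t = 0" by simp
    qed
  qed
  finally show "delta_bd (Xcx n) c t = DD {1..int n} {} c t"
    unfolding K_def DD_def Xcx_YY .
qed

lemma length_Xcx: "s \<in> Xcx n \<Longrightarrow> length s \<le> n"
proof -
  assume s: "s \<in> Xcx n"
  then have d: "distinct (map abs s)" and ss: "set (map abs s) \<subseteq> {1..int n}"
    unfolding Xcx_def by auto
  have "length s = card (set (map abs s))" using distinct_card[OF d] by simp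
  also have "\<dots> \<le> card {1..int n}" using ss by (intro card_mono) simp_all
  also have "\<dots> = n" by simp
  finally show ?thesis .
qed

theorem mainTheorem6:
  fixes n :: nat
  assumes "n \<ge> 1"
  shows "spherical (Xcx n) (int n - 1)"
  unfolding spherical_def
proof (intro conjI allI impI)
  show "\<exists>s\<in>Xcx n. s \<noteq> []"
    using assms by (intro bexI[of _ "[1]"]) (auto simp: Xcx_def)
next
  fix i :: int assume i: "-1 \<le> i \<and> i \<noteq> int n - 1"
  show "reduced_homology_vanishes (Xcx n) i"
    unfolding reduced_homology_vanishes_def
  proof (intro allI impI)
    fix c assume c: "is_chain (Xcx n) (nat (i + 1)) c \<and> delta_bd (Xcx n) c = (\<lambda>_. 0)"
    define k where "k = nat (i + 1)"
    have k2: "nat (i + 2) = Suc k"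
    proof -
      have "nat (i + 2) = nat ((i + 1) + 1)" by (simp add: add.assoc)
      also have "\<dots> = nat (i + 1) + nat 1" using i by (intro nat_add_distrib) simp_all
      finally show ?thesis unfolding k_def by simp
    qed
    show "\<exists>b. is_chain (Xcx n) (nat (i + 2)) b \<and> delta_bd (Xcx n) b = c"
    proof (cases "k < n")
      case True
      have ch: "ch {1..int n} {} k c" using c unfolding ch_def is_chain_def k_def Xcx_YY by simp
      have cy: "DD {1..int n} {} c = (\<lambda>_. 0)" using c delta_DD by metis
      obtain b where "ch {1..int n} {} (Suc k) b" "DD {1..int n} {} b = c"
        using main[of "{1..int n}" "{}" k c] True ch cy by auto
      then show ?thesis unfolding k2 is_chain_def ch_def Xcx_YY[symmetric] delta_DD by auto
    next
      case False
      then have kn: "k > n" using i unfolding k_def by linarith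
      have c0: "c = (\<lambda>_. 0)"
      proof
        fix s show "c s = 0"
        proof (rule ccontr)
          assume "c s \<noteq> 0"
          then have "s \<in> Xcx n" "length s = k" using c unfolding is_chain_def k_def by auto
          then show False using length_Xcx kn by fastforce
        qed
      qed
      show ?thesis
        by (rule exI[of _ "\<lambda>_. 0"]) (simp add: is_chain_def delta_bd_def c0)
    qed
  qed
qed


end
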